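(* Let $n\geq 2$, let $U\subset\mathbb{R}^n$ be an open set containing the closed ball $\overline{B(0,1)}$, and let $f:U\rightarrow\mathbb{R}^n$ be a weakly $H$-quasisymmetric embedding with $H=1+\epsilon$, $0\leq\epsilon\leq 1/20$, and $f(\pm e_1)=\pm e_1$. Let $L=e_1^\perp$ be the hyperplane through the origin orthogonal to $e_1$. Then $f(B(0,1))\supset B(f(0),5/6)$ and $\theta_{f(L\cap U)}(f(0),1/2)\leq 20\epsilon$.
   Context: $e_1=(1,0,\dots,0)$. An embedding $f:U\to\mathbb{R}^n$ is weakly $H$-quasisymmetric if $|f(x)-f(y)|\leq H|f(x)-f(z)|$ for all $x,y,z\in U$ with $|x-y|\leq|x-z|$. For $\Sigma\subset\mathbb{R}^n$, $x\in\Sigma$, $r>0$, the local flatness is $\theta_\Sigma(x,r)=\frac1r\min_{L'}\mathrm{HD}[\Sigma\cap B(x,r),(x+L')\cap B(x,r)]$, the minimum over all $(n-1)$-dimensional linear subspaces $L'$, where $\mathrm{HD}[A,B]=\max\{\sup_{a\in A}\mathrm{dist}(a,B),\sup_{b\in B}\mathrm{dist}(b,A)\}$ is the Hausdorff distance. *)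

theory Defs
  imports "HOL-Analysis.Analysis"
begin

definition weakly_qs :: "real \<Rightarrow> 'a::euclidean_space set \<Rightarrow> ('a \<Rightarrow> 'a) \<Rightarrow> bool" where
  "weakly_qs H U f \<longleftrightarrow>
     (\<forall>x\<in>U. \<forall>y\<in>U. \<forall>z\<in>U. norm (x - y) \<le> norm (x - z) \<longrightarrow>
        norm (f x - f y) \<le> H * norm (f x - f z))"

definition embedding_on :: "'a::euclidean_space set \<Rightarrow> ('a \<Rightarrow> 'a) \<Rightarrow> bool" where
  "embedding_on U f \<longleftrightarrow> (\<exists>g. homeomorphism U (f ` U) f g)"

text \<open>Hausdorff distance (used for nonempty bounded sets).\<close>
definition HD :: "'a::euclidean_space set \<Rightarrow> 'a set \<Rightarrow> real" where
  "HD A B = max (SUP a\<in>A. infdist a B) (SUP b\<in>B. infdist b A)"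

text \<open>Local flatness theta_Sigma(x,r); min over (n-1)-dim linear subspaces.\<close>
definition theta :: "'a::euclidean_space set \<Rightarrow> 'a \<Rightarrow> real \<Rightarrow> real" where
  "theta S x r = (1 / r) *
     Inf {HD (S \<inter> ball x r) (((+) x ` L') \<inter> ball x r) | L'.
            subspace L' \<and> dim L' = DIM('a) - 1}"

end

theory Submission
  imports Defs
begin

lemma nsq:
  fixes z e :: "'a::real_inner"
  assumes "norm e = 1"
  shows "(norm (z + e))^2 = (norm z)^2 + 2*(z \<bullet> e) + 1"
    "(norm (z - e))^2 = (norm z)^2 - 2*(z \<bullet> e) + 1"
proof -
  have ee: "e \<bullet> e = 1" using assms by (simp add: norm_eq_sqrt_inner)
  show "(norm (z + e))^2 = (norm z)^2 + 2*(z \<bullet> e) + 1"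
    by (simp add: power2_norm_eq_inner inner_add_left inner_add_right inner_commute ee)
  show "(norm (z - e))^2 = (norm z)^2 - 2*(z \<bullet> e) + 1"
    by (simp add: power2_norm_eq_inner inner_diff_left inner_diff_right inner_commute ee)
qed

lemma hd_nonneg:
  fixes A B :: "'a::euclidean_space set"
  assumes "A \<noteq> {}" "B \<noteq> {}" "A \<subseteq> ball c r" "B \<subseteq> ball c r"
  shows "0 \<le> HD A B"
proof -
  obtain a where a: "a \<in> A" using assms by auto
  obtain b where b: "b \<in> B" using assms by auto
  have "bdd_above ((\<lambda>x. infdist x B) ` A)"
  proof (rule bdd_aboveI2)
    fix x assume "x \<in> A"
    have "infdist x B \<le> dist x b" using b by (rule infdist_le)
    also have "\<dots> \<le> dist x c + dist c b" by (rule dist_triangle)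
    also have "\<dots> \<le> 2*r"
    proof -
      have "dist c x < r" using \<open>x\<in>A\<close> assms(3) by auto
      moreover have "dist c b < r" using b assms(4) by auto
      ultimately show ?thesis by (simp add: dist_commute)
    qed
    finally show "infdist x B \<le> 2*r" .
  qed
  then have "infdist a B \<le> (SUP x\<in>A. infdist x B)" using a by (rule cSUP_upper2) simp
  moreover have "0 \<le> infdist a B" by (rule infdist_nonneg)
  ultimately show ?thesis unfolding HD_def by linarith
qed

lemma choose_s:
  fixes r \<delta> :: real
  assumes "0 \<le> r" "r < 1/2" "0 < \<delta>" "\<delta> \<le> 31/100"
  shows "\<exists>s. 0 \<le> s \<and> s \<le> 1 \<and> (s*r)^2 + \<delta>^2 < 1/4 \<and> (1-s)*r \<le> 2*\<delta>^2"
proof (cases "r^2 + \<delta>^2 < 1/4")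
  case True then show ?thesis by (intro exI[of _ 1]) (simp add: assms)
next
  case False
  have d2: "\<delta>^2 \<le> 961/10000" using assms power_mono[of \<delta> "31/100" 2] by (simp add: power2_eq_square)
  have r2: "r^2 \<ge> 1/4 - 961/10000" using False d2 by linarith
  have r39: "r \<ge> 39/100"
  proof (rule ccontr)
    assume "\<not> ?thesis"
    then have "r^2 \<le> (39/100)^2" using assms power_mono[of r "39/100" 2] by simp
    then show False using r2 by (simp add: power2_eq_square)
  qed
  define s where "s = (r - 2*\<delta>^2)/r"
  have sr: "s*r = r - 2*\<delta>^2" using r39 by (simp add: s_def)
  have "0 \<le> s" using r39 d2 by (simp add: s_def)
  moreover have "s \<le> 1" using r39 by (simp add: s_def field_simps)
  moreover have "(s*r)^2 + \<delta>^2 < 1/4"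
  proof -
    have "(s*r)^2 + \<delta>^2 = r^2 + \<delta>^2 * (1 + 4*\<delta>^2 - 4*r)" unfolding sr by (simp add: power2_eq_square algebra_simps)
    moreover have "\<delta>^2 * (1 + 4*\<delta>^2 - 4*r) \<le> 0"
      using d2 r39 by (intro mult_nonneg_nonpos) auto
    moreover have "r^2 < 1/4" using assms power_strict_mono[of r "1/2" 2] by (simp add: power_divide)
    ultimately show ?thesis by linarith
  qed
  moreover have "(1-s)*r \<le> 2*\<delta>^2" using sr by (simp add: algebra_simps)
  ultimately show ?thesis by blast
qed
lemma pyth:
  fixes w e :: "'a::real_inner"
  assumes "w \<bullet> e = 0" "norm e = 1"
  shows "(norm (w + t *\<^sub>R e))^2 = (norm w)^2 + t^2"
proof -
  have "w \<bullet> (t *\<^sub>R e) = 0" using assms by simp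
  then have "(norm (w + t *\<^sub>R e))^2 = (norm w)^2 + (norm (t *\<^sub>R e))^2"
    by (intro norm_add_Pythagorean) (simp add: orthogonal_def)
  then show ?thesis using assms(2) by (simp add: power_mult_distrib)
qed

lemma sb:
  fixes x c N B :: real
  assumes "4*x \<le> 4*c*N" "N \<le> B" "0 \<le> c"
  shows "x \<le> c*B"
proof -
  have "c*N \<le> c*B" using assms by (intro mult_left_mono) auto
  then show ?thesis using assms(1) by linarith
qed

lemma sq_lt_half:
  fixes x :: real
  assumes "0 \<le> x" "x^2 < 1/4"
  shows "x < 1/2"
proof (rule ccontr)
  assume "\<not> x < 1/2"
  then have "(1/2)^2 \<le> x^2" by (intro power_mono) auto
  then show False using assms by (simp add: power_divide)
qed

theorem lemma2p3:
  fixes f :: "'a::euclidean_space \<Rightarrow> 'a" and U :: "'a set"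
    and e1 :: 'a and \<epsilon> :: real
  assumes "DIM('a) \<ge> 2"
    and "e1 \<in> Basis"
    and "open U" and "cball 0 1 \<subseteq> U"
    and "embedding_on U f"
    and "weakly_qs (1 + \<epsilon>) U f"
    and "0 \<le> \<epsilon>" and "\<epsilon> \<le> 1/20"
    and "f e1 = e1" and "f (- e1) = - e1"
  shows "ball (f 0) (5/6) \<subseteq> f ` ball 0 1
    \<and> theta (f ` ({x. x \<bullet> e1 = 0} \<inter> U)) (f 0) (1/2) \<le> 20 * \<epsilon>"
proof -
  define H where "H = 1 + \<epsilon>"
  have H1: "1 \<le> H" and H2: "H \<le> 21/20" using assms(7,8) by (auto simp: H_def)
  obtain g where hom: "homeomorphism U (f ` U) f g" using assms(5) unfolding embedding_on_def by blast
  have contf: "continuous_on U f" and contg: "continuous_on (f ` U) g"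
    and gf: "\<And>x. x \<in> U \<Longrightarrow> g (f x) = x" and gU: "\<And>y. y \<in> f ` U \<Longrightarrow> g y \<in> U"
    and fg: "\<And>y. y \<in> f ` U \<Longrightarrow> f (g y) = y"
    using hom unfolding homeomorphism_def by auto
  have injf: "inj_on f U" by (metis gf inj_onI)
  have qs: "\<And>x y z. x \<in> U \<Longrightarrow> y \<in> U \<Longrightarrow> z \<in> U \<Longrightarrow> norm (x - y) \<le> norm (x - z)
      \<Longrightarrow> norm (f x - f y) \<le> H * norm (f x - f z)"
    using assms(6) unfolding weakly_qs_def H_def by blast
  have ne1: "norm e1 = 1" using assms(2) by simp
  have n2: "norm (e1 + e1) = 2"
  proof -
    have "norm (e1 + e1) = norm ((2::real) *\<^sub>R e1)" by (simp add: scaleR_2)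
    then show ?thesis using ne1 by simp
  qed
  have e1U: "e1 \<in> U" and me1U: "- e1 \<in> U" and zU: "0 \<in> U" using assms(4) ne1 by auto
  define p where "p = f 0"
  have b1: "norm (p - e1) \<le> 2*H"
  proof -
    have "norm (f e1 - f 0) \<le> H * norm (f e1 - f (- e1))"
      by (rule qs[OF e1U zU me1U]) (simp add: ne1 n2)
    then show ?thesis using assms(9,10) by (simp add: p_def norm_minus_commute n2)
  qed
  have b2: "norm (p + e1) \<le> 2*H"
  proof -
    have "norm (f (-e1) - f 0) \<le> H * norm (f (-e1) - f e1)"
      by (rule qs[OF me1U zU e1U]) (simp add: ne1 n2 norm_minus_commute)
    moreover have "- e1 - f 0 = - (p + e1)" by (simp add: p_def)
    moreover have "norm (- e1 - e1) = 2" using n2 by (metis minus_add_distrib norm_minus_cancel diff_conv_add_uminus)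
    ultimately show ?thesis using assms(9,10) by (simp add: n2 del: minus_add_distrib)
  qed
  define c where "c = (H^2 - 1)/4"
  have c0: "0 \<le> c" using H1 by (simp add: c_def)
  have sgn1: "4 * (f x \<bullet> e1) \<le> 4 * c * (norm (f x - e1))^2" if "x \<in> U" "x \<bullet> e1 \<le> 0" for x
  proof -
    have "norm (x - (- e1)) \<le> norm (x - e1)"
      using that(2) nsq[OF ne1, of x] by (simp add: norm_le_square power2_norm_eq_inner[symmetric])
    then have "norm (f x - f (-e1)) \<le> H * norm (f x - f e1)" by (rule qs[OF that(1) me1U e1U])
    then have "norm (f x + e1) \<le> H * norm (f x - e1)" using assms(9,10) by simp
    then have "(norm (f x + e1))^2 \<le> (H * norm (f x - e1))^2" by (rule power_mono) simp
    then have "(norm (f x + e1))^2 \<le> H^2 * (norm (f x - e1))^2" by (simp add: power_mult_distrib)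
    moreover have "(norm (f x + e1))^2 - (norm (f x - e1))^2 = 4 * (f x \<bullet> e1)" using nsq[OF ne1, of "f x"] by simp
    moreover have "4 * c * (norm (f x - e1))^2 = H^2 * (norm (f x - e1))^2 - (norm (f x - e1))^2" unfolding c_def by (simp add: left_diff_distrib)
    ultimately show ?thesis by linarith
  qed
  have sgn2: "- 4 * (f x \<bullet> e1) \<le> 4 * c * (norm (f x + e1))^2" if "x \<in> U" "x \<bullet> e1 \<ge> 0" for x
  proof -
    have "norm (x - e1) \<le> norm (x - (- e1))"
      using that(2) nsq[OF ne1, of x] by (simp add: norm_le_square power2_norm_eq_inner[symmetric])
    then have "norm (f x - f e1) \<le> H * norm (f x - f (- e1))" by (rule qs[OF that(1) e1U me1U])
    then have "norm (f x - e1) \<le> H * norm (f x + e1)" using assms(9,10) by simp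
    then have "(norm (f x - e1))^2 \<le> (H * norm (f x + e1))^2" by (rule power_mono) simp
    then have "(norm (f x - e1))^2 \<le> H^2 * (norm (f x + e1))^2" by (simp add: power_mult_distrib)
    moreover have "(norm (f x + e1))^2 - (norm (f x - e1))^2 = 4 * (f x \<bullet> e1)" using nsq[OF ne1, of "f x"] by simp
    moreover have "4 * c * (norm (f x + e1))^2 = H^2 * (norm (f x + e1))^2 - (norm (f x + e1))^2" unfolding c_def by (simp add: left_diff_distrib)
    ultimately show ?thesis by linarith
  qed
  have far: "5/6 < dist p (f x)" if "x \<in> U" "norm x = 1" for x
  proof -
    have h1: "norm (p - e1) \<le> H * norm (p - f x)"
      using qs[OF zU e1U that(1)] assms(9) ne1 that(2) by (simp add: p_def)
    have h2: "norm (p + e1) \<le> H * norm (p - f x)"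
      using qs[OF zU me1U that(1)] assms(10) ne1 that(2) by (simp add: p_def)
    have "norm (e1 - (-e1)) \<le> norm (e1 - p) + norm (p - (-e1))"
      by (rule norm_diff_triangle_le) auto
    then have t: "2 \<le> norm (p - e1) + norm (p + e1)" using n2 by (simp add: norm_minus_commute)
    have "H * norm (p - f x) \<le> 21/20 * norm (p - f x)" using H2 by (intro mult_right_mono) auto
    then show ?thesis using h1 h2 t by (simp add: dist_norm)
  qed
  have part1: "ball p (5/6) \<subseteq> f ` ball 0 1"
  proof -
    have sub: "ball 0 1 \<subseteq> U" "cball 0 1 \<subseteq> U" using assms(4) by auto
    have op: "open (f ` ball 0 1)"
      by (rule invariance_of_domain) (auto intro: continuous_on_subset[OF contf sub(1)] inj_on_subset[OF injf sub(1)])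
    have cl: "closed (f ` cball 0 1)"
      by (intro compact_imp_closed compact_continuous_image continuous_on_subset[OF contf sub(2)]) simp
    have key: "y \<in> f ` ball 0 1" if y1: "y \<in> ball p (5/6)" and y2: "y \<in> f ` cball 0 1" for y
    proof -
      obtain x where x: "x \<in> cball 0 1" "y = f x" using y2 by auto
      show ?thesis
      proof (cases "norm x = 1")
        case True
        have "x \<in> U" using x(1) sub(2) by auto
        then have "5/6 < dist p y" using far[OF _ True] x(2) by blast
        then show ?thesis using y1 by simp
      next
        case False then have "x \<in> ball 0 1" using x by simp
        then show ?thesis using x by simp
      qed
    qed
    have "f ` ball 0 1 \<inter> ball p (5/6) = {} \<or> (- f ` cball 0 1) \<inter> ball p (5/6) = {}"
    proof (rule connectedD[OF connected_ball op])
      show "open (- f ` cball 0 1)" using cl by (simp add: open_Compl)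
      show "f ` ball 0 1 \<inter> - f ` cball 0 1 \<inter> ball p (5/6) = {}" by auto
      show "ball p (5/6) \<subseteq> f ` ball 0 1 \<union> - f ` cball 0 1" using key by auto
    qed
    moreover have "p \<in> f ` ball 0 1 \<inter> ball p (5/6)" by (simp add: p_def)
    ultimately have "ball p (5/6) \<subseteq> f ` cball 0 1" by auto
    then show ?thesis using key by auto
  qed
  define L where "L = {x::'a. x \<bullet> e1 = 0}"
  define S where "S = f ` (L \<inter> U)"
  define Sb where "Sb = S \<inter> ball p (1/2)"
  define P where "P = (+) p ` L"
  define Pb where "Pb = P \<inter> ball p (1/2)"
  have ee: "e1 \<bullet> e1 = 1" using ne1 by (simp add: norm_eq_sqrt_inner)
  have K: "(2*H)^2 + (1/2 + 2*H)^2 \<le> 1117/100"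
  proof -
    have "(2*H)^2 \<le> (21/10)^2" using H1 H2 by (intro power_mono) auto
    moreover have "(1/2 + 2*H)^2 \<le> (26/10)^2" using H1 H2 by (intro power_mono) auto
    ultimately show ?thesis by (simp add: power2_eq_square)
  qed
  have cb: "c \<le> 41/80 * \<epsilon>"
  proof -
    have "\<epsilon> * \<epsilon> \<le> 1/20 * \<epsilon>" using assms(7,8) by (intro mult_right_mono) auto
    then show ?thesis by (simp add: c_def H_def power2_eq_square algebra_simps)
  qed
  have cK: "c * ((2*H)^2 + (1/2 + 2*H)^2) \<le> 23/4 * \<epsilon>"
  proof -
    have "c * ((2*H)^2 + (1/2 + 2*H)^2) \<le> (41/80 * \<epsilon>) * (1117/100)"
      using cb K c0 by (intro mult_mono) auto
    then show ?thesis using assms(7) by simp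
  qed
  have cK2: "c * (2*H)^2 + c * (1/2 + 2*H)^2 \<le> 23/4 * \<epsilon>"
    using cK by (simp only: distrib_left)
  have pU: "p \<in> S" using zU by (simp add: S_def L_def p_def)
  have p1a: "p \<bullet> e1 \<le> c * (2*H)^2"
  proof -
    have "4 * (p \<bullet> e1) \<le> 4 * c * (norm (p - e1))^2" using sgn1[OF zU] by (simp add: p_def)
    moreover have "(norm (p - e1))^2 \<le> (2*H)^2" using b1 by (intro power_mono) auto
    ultimately show ?thesis using c0 by (rule sb)
  qed
  have p1b: "- (p \<bullet> e1) \<le> c * (2*H)^2"
  proof -
    have "- 4 * (p \<bullet> e1) \<le> 4 * c * (norm (p + e1))^2" using sgn2[OF zU] by (simp add: p_def)
    moreover have "(norm (p + e1))^2 \<le> (2*H)^2" using b2 by (intro power_mono) auto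
    ultimately show ?thesis using c0 sb[of "- (p \<bullet> e1)"] by simp
  qed
  have near_m: "(norm (q - e1))^2 \<le> (1/2 + 2*H)^2" if "q \<in> ball p (1/2)" for q
  proof -
    have "norm (q - e1) \<le> norm (q - p) + norm (p - e1)" by (rule norm_diff_triangle_le) auto
    moreover have "norm (q - p) < 1/2" using that by (simp add: dist_norm norm_minus_commute)
    ultimately show ?thesis using b1 by (intro power_mono) auto
  qed
  have near_p: "(norm (q + e1))^2 \<le> (1/2 + 2*H)^2" if "q \<in> ball p (1/2)" for q
  proof -
    have "norm (q - (- e1)) \<le> norm (q - p) + norm (p - (- e1))" by (rule norm_diff_triangle_le) auto
    moreover have "norm (q - p) < 1/2" using that by (simp add: dist_norm norm_minus_commute)
    ultimately show ?thesis using b2 by (intro power_mono) auto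
  qed
  have dirA: "infdist a Pb \<le> 10 * \<epsilon>" if aS: "a \<in> Sb" for a
  proof -
    obtain x where x: "x \<in> L" "x \<in> U" "a = f x" "a \<in> ball p (1/2)" using aS by (auto simp: Sb_def S_def)
    have a1: "a \<bullet> e1 \<le> c * (1/2 + 2*H)^2"
    proof -
      have "4 * (a \<bullet> e1) \<le> 4 * c * (norm (a - e1))^2" using sgn1[OF x(2)] x by (simp add: L_def)
      then show ?thesis using near_m[OF x(4)] c0 by (rule sb)
    qed
    have a2: "- (a \<bullet> e1) \<le> c * (1/2 + 2*H)^2"
    proof -
      have "- 4 * (a \<bullet> e1) \<le> 4 * c * (norm (a + e1))^2" using sgn2[OF x(2)] x by (simp add: L_def)
      then show ?thesis using near_p[OF x(4)] c0 sb[of "- (a \<bullet> e1)"] by simp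
    qed
    define t where "t = (a - p) \<bullet> e1"
    define w where "w = (a - p) - t *\<^sub>R e1"
    have we: "w \<bullet> e1 = 0" by (simp add: w_def t_def inner_diff_left ee)
    have ap: "a - p = w + t *\<^sub>R e1" by (simp add: w_def)
    have "(norm (a - p))^2 = (norm w)^2 + t^2" using pyth[OF we ne1] ap by simp
    moreover have "norm (a - p) < 1/2" using x(4) by (simp add: dist_norm norm_minus_commute)
    then have "(norm (a - p))^2 < (1/2)^2" by (intro power_strict_mono) auto
    then have "(norm (a - p))^2 < 1/4" by (simp add: power_divide)
    moreover have "0 \<le> t^2" by simp
    ultimately have "(norm w)^2 < 1/4" by linarith
    then have nw: "norm w < 1/2" by (intro sq_lt_half) auto
    have "p + w \<in> Pb" using we nw by (auto simp: Pb_def P_def L_def dist_norm)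
    then have "infdist a Pb \<le> dist a (p + w)" by (rule infdist_le)
    also have "\<dots> = norm (t *\<^sub>R e1)"
    proof -
      have "a - (p + w) = t *\<^sub>R e1" using ap by (simp add: algebra_simps)
      then show ?thesis by (simp add: dist_norm)
    qed
    also have "\<dots> = \<bar>a \<bullet> e1 - p \<bullet> e1\<bar>" using ne1 by (simp add: t_def inner_diff_left)
    also have "\<dots> \<le> 10 * \<epsilon>" using a1 a2 p1a p1b cK assms(7) by (simp add: algebra_simps)
    finally show ?thesis .
  qed
  have ballsub: "ball p (1/2) \<subseteq> f ` U"
  proof -
    have "ball p (1/2) \<subseteq> ball p (5/6)" by (rule subset_ball) simp
    also have "\<dots> \<subseteq> f ` ball 0 1" by (rule part1)
    also have "\<dots> \<subseteq> f ` U" using assms(4) by (intro image_mono) auto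
    finally show ?thesis .
  qed
  have dirB_eta: "infdist b Sb \<le> 10 * \<epsilon> + \<eta>" if bP: "b \<in> Pb" and eta: "0 < \<eta>" for b \<eta>
  proof -
    obtain w where w: "w \<in> L" "b = p + w" using bP by (auto simp: Pb_def P_def)
    have we: "w \<bullet> e1 = 0" using w(1) by (simp add: L_def)
    have nw: "norm w < 1/2" using bP w(2) by (simp add: Pb_def dist_norm)
    define t where "t = min (\<eta>/3) (1/100)"
    define \<delta> where "\<delta> = 6*\<epsilon> + t"
    have t0: "0 < t" "t \<le> \<eta>/3" "t \<le> 1/100" using eta by (auto simp: t_def)
    have d0: "0 < \<delta>" "\<delta> \<le> 31/100" using t0 assms(7,8) by (auto simp: \<delta>_def)
    obtain s where s: "0 \<le> s" "s \<le> 1" "(s * norm w)^2 + \<delta>^2 < 1/4" "(1 - s) * norm w \<le> 2*\<delta>^2"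
      using choose_s[OF norm_ge_zero nw d0] by blast
    define v where "v = s *\<^sub>R w"
    have ve: "v \<bullet> e1 = 0" using we by (simp add: v_def)
    have nv: "norm v = s * norm w" using s(1) by (simp add: v_def)
    define \<gamma> where "\<gamma> = (\<lambda>\<tau>::real. p + v + ((2*\<tau> - 1) * \<delta>) *\<^sub>R e1)"
    have \<gamma>ball: "\<gamma> \<tau> \<in> ball p (1/2)" if "0 \<le> \<tau>" "\<tau> \<le> 1" for \<tau>
    proof -
      have "\<gamma> \<tau> - p = v + ((2*\<tau> - 1) * \<delta>) *\<^sub>R e1" by (simp add: \<gamma>_def)
      then have eq: "(norm (\<gamma> \<tau> - p))^2 = (s * norm w)^2 + ((2*\<tau> - 1) * \<delta>)^2"
        using pyth[OF ve ne1] nv by simp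
      have "\<bar>2*\<tau> - 1\<bar> \<le> 1" using that by auto
      then have "\<bar>(2*\<tau> - 1) * \<delta>\<bar> \<le> \<delta>" using d0 by (simp add: abs_mult mult_left_le_one_le)
      then have "((2*\<tau> - 1) * \<delta>)^2 \<le> \<delta>^2" by (metis abs_le_square_iff abs_of_pos d0(1))
      then have "(norm (\<gamma> \<tau> - p))^2 < 1/4" using eq s(3) by linarith
      then have "norm (\<gamma> \<tau> - p) < 1/2" by (intro sq_lt_half) auto
      then show ?thesis by (simp add: dist_norm norm_minus_commute)
    qed
    have \<gamma>e: "\<gamma> \<tau> \<bullet> e1 = p \<bullet> e1 + (2*\<tau> - 1) * \<delta>" for \<tau>
      by (simp add: \<gamma>_def inner_add_left ve ee)
    have \<gamma>U: "\<gamma> ` {0..1} \<subseteq> f ` U" using \<gamma>ball ballsub by auto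
    have cont: "continuous_on {0..1} (\<lambda>\<tau>. g (\<gamma> \<tau>) \<bullet> e1)"
    proof -
      have "continuous_on {0..1} \<gamma>" unfolding \<gamma>_def by (intro continuous_intros)
      then have "continuous_on {0..1} (g \<circ> \<gamma>)" by (rule continuous_on_compose[OF _ continuous_on_subset[OF contg \<gamma>U]])
      then show ?thesis unfolding comp_def by (intro continuous_intros)
    qed
    have h0: "g (\<gamma> 0) \<bullet> e1 \<le> 0"
    proof (rule ccontr)
      assume neg: "\<not> ?thesis"
      have gin: "\<gamma> 0 \<in> f ` U" using \<gamma>U by auto
      have "- 4 * (f (g (\<gamma> 0)) \<bullet> e1) \<le> 4 * c * (norm (f (g (\<gamma> 0)) + e1))^2"
        using sgn2[OF gU[OF gin]] neg by simp
      then have "- 4 * (\<gamma> 0 \<bullet> e1) \<le> 4 * c * (norm (\<gamma> 0 + e1))^2" using fg[OF gin] by simp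
      then have "- (\<gamma> 0 \<bullet> e1) \<le> c * (1/2 + 2*H)^2"
        using near_p[OF \<gamma>ball[OF order_refl zero_le_one]] c0 sb[of "- (\<gamma> 0 \<bullet> e1)"] by simp
      moreover have "\<gamma> 0 \<bullet> e1 = p \<bullet> e1 - \<delta>" using \<gamma>e[of 0] by simp
      ultimately show False using p1a cK2 \<delta>_def t0 assms(7) by linarith
    qed
    have h1: "0 \<le> g (\<gamma> 1) \<bullet> e1"
    proof (rule ccontr)
      assume neg: "\<not> ?thesis"
      have gin: "\<gamma> 1 \<in> f ` U" using \<gamma>U by auto
      have "4 * (f (g (\<gamma> 1)) \<bullet> e1) \<le> 4 * c * (norm (f (g (\<gamma> 1)) - e1))^2"
        using sgn1[OF gU[OF gin]] neg by simp
      then have "4 * (\<gamma> 1 \<bullet> e1) \<le> 4 * c * (norm (\<gamma> 1 - e1))^2" using fg[OF gin] by simp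
      then have "\<gamma> 1 \<bullet> e1 \<le> c * (1/2 + 2*H)^2"
        using near_m[OF \<gamma>ball[OF zero_le_one order_refl]] c0 by (rule sb)
      moreover have "\<gamma> 1 \<bullet> e1 = p \<bullet> e1 + \<delta>" using \<gamma>e[of 1] by simp
      ultimately show False using p1b cK2 \<delta>_def t0 assms(7) by linarith
    qed
    obtain \<tau> where tau: "0 \<le> \<tau>" "\<tau> \<le> 1" "g (\<gamma> \<tau>) \<bullet> e1 = 0"
      using IVT'[of "\<lambda>\<tau>. g (\<gamma> \<tau>) \<bullet> e1" 0 0 1, OF h0 h1 _ cont] by auto
    have gin: "\<gamma> \<tau> \<in> f ` U" using \<gamma>U tau by auto
    have "\<gamma> \<tau> \<in> Sb"
    proof -
      have "g (\<gamma> \<tau>) \<in> L \<inter> U" using gU[OF gin] tau by (simp add: L_def)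
      then have "f (g (\<gamma> \<tau>)) \<in> S" by (simp add: S_def)
      then show ?thesis using fg[OF gin] \<gamma>ball[OF tau(1,2)] by (simp add: Sb_def)
    qed
    then have "infdist b Sb \<le> dist b (\<gamma> \<tau>)" by (rule infdist_le)
    also have "\<dots> = norm ((1 - s) *\<^sub>R w - ((2*\<tau> - 1) * \<delta>) *\<^sub>R e1)"
      by (simp add: dist_norm w(2) \<gamma>_def v_def algebra_simps)
    also have "\<dots> \<le> norm ((1 - s) *\<^sub>R w) + norm (((2*\<tau> - 1) * \<delta>) *\<^sub>R e1)" by (rule norm_triangle_ineq4)
    also have "\<dots> \<le> 2*\<delta>^2 + \<delta>"
    proof -
      have m1: "norm ((1 - s) *\<^sub>R w) = (1 - s) * norm w" using s(2) by (simp add: abs_of_nonneg)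
      have m2: "norm (((2*\<tau> - 1) * \<delta>) *\<^sub>R e1) = \<bar>(2*\<tau> - 1) * \<delta>\<bar>" using ne1 by simp
      have "\<bar>2*\<tau> - 1\<bar> \<le> 1" using tau by auto
      then have "\<bar>(2*\<tau> - 1) * \<delta>\<bar> \<le> \<delta>" using d0 by (simp add: abs_mult mult_left_le_one_le)
      then show ?thesis using s(4) m1 m2 by linarith
    qed
    also have "\<dots> \<le> 10 * \<epsilon> + \<eta>"
    proof -
      have e1: "\<epsilon> * \<epsilon> \<le> \<epsilon> / 20" using assms(7,8) by (metis mult_left_mono mult.commute times_divide_eq_right mult_1 mult.right_neutral)
      have e2: "\<epsilon> * t \<le> t / 20" using assms(8) t0 by (simp add: mult_right_mono)
      have e3: "t * t \<le> t / 100" using t0 by (simp add: mult_left_mono)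
      have "2*\<delta>^2 + \<delta> = 72 * (\<epsilon>*\<epsilon>) + 24 * (\<epsilon>*t) + 2*(t*t) + 6*\<epsilon> + t"
        by (simp add: \<delta>_def power2_eq_square algebra_simps)
      then show ?thesis using e1 e2 e3 t0 assms(7) by linarith
    qed
    finally show ?thesis .
  qed
  have dirB: "infdist b Sb \<le> 10 * \<epsilon>" if "b \<in> Pb" for b
    using dirB_eta[OF that] by (rule field_le_epsilon)
  have Sbne: "Sb \<noteq> {}" using pU by (auto simp: Sb_def)
  have pP: "p \<in> Pb" by (auto simp: Pb_def P_def L_def intro: image_eqI[of _ _ 0])
  then have Pbne: "Pb \<noteq> {}" by auto
  have HDb: "HD Sb Pb \<le> 10 * \<epsilon>"
    unfolding HD_def using cSUP_least[OF Sbne dirA] cSUP_least[OF Pbne dirB] by simp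
  define X where "X = {HD (S \<inter> ball p (1/2)) (((+) p ` L') \<inter> ball p (1/2)) | L'.
            subspace L' \<and> dim L' = DIM('a) - 1}"
  have e10: "e1 \<noteq> 0" using ne1 by auto
  have Leq: "L = {x. e1 \<bullet> x = 0}" by (auto simp: L_def inner_commute)
  have "HD Sb Pb \<in> X" unfolding X_def Sb_def Pb_def P_def
    using subspace_hyperplane[of e1] dim_hyperplane[OF e10] Leq by auto
  moreover have "bdd_below X"
  proof (rule bdd_belowI)
    fix y assume "y \<in> X"
    then obtain L' where L': "subspace L'" "y = HD (S \<inter> ball p (1/2)) (((+) p ` L') \<inter> ball p (1/2))"
      by (auto simp: X_def)
    have "p \<in> ((+) p ` L') \<inter> ball p (1/2)" using subspace_0[OF L'(1)] by (auto intro: image_eqI[of _ _ 0])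
    then show "0 \<le> y" unfolding L'(2) using pU by (intro hd_nonneg[of _ _ p "1/2"]) auto
  qed
  ultimately have "Inf X \<le> HD Sb Pb" by (rule cInf_lower)
  then have "theta S p (1/2) \<le> 20 * \<epsilon>" using HDb unfolding theta_def X_def by simp
  then show ?thesis using part1 by (simp add: S_def L_def p_def)
qed

end
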